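(* For every finite field $\mathbb{F}_q$ and every pair of integers $s,t\ge1$, the linear code $C=\bigoplus_{i=1}^{s}\mathrm{Rep}_t(\mathbb{F}_q)\le\mathbb{F}_q^{st}$ is an abelian group code.
   Context: $\mathrm{Rep}_t(\mathbb{F}_q)=\{(\lambda,\dots,\lambda):\lambda\in\mathbb{F}_q\}\le\mathbb{F}_q^t$ is the repetition code; the direct sum consists of vectors in $\mathbb{F}_q^{st}$ formed by concatenating $s$ blocks, each block a constant vector of length $t$. Let $\mathcal{B}=\{e_1,\dots,e_n\}$ be the standard basis of $\mathbb{F}_q^n$. For a finite group $H$ of order $n$, a linear code $C\le\mathbb{F}_q^n$ is an $H$-code if there exists a bijection $\phi:\mathcal{B}\to H$ whose $\mathbb{F}_q$-linear extension $\tilde\phi:\mathbb{F}_q^n\to\mathbb{F}_q[H]$ maps $C$ onto a two-sided ideal of the group algebra $\mathbb{F}_q[H]$. $C$ is an abelian group code if it is an $H$-code for some abelian group $H$. *)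

theory Defs
  imports "HOL-Algebra.Group"
begin

text \<open>Vectors of F^n: functions nat => F vanishing outside {0..<n};
  coordinate i (0-based) corresponds to the standard basis vector e_(i+1).\<close>
definition vecs :: "nat \<Rightarrow> (nat \<Rightarrow> 'a::zero) set" where
  "vecs n = {v. \<forall>i\<ge>n. v i = 0}"

definition rep_code :: "nat \<Rightarrow> (nat \<Rightarrow> 'a::zero) set" where
  "rep_code t = {v \<in> vecs t. \<exists>c. \<forall>i<t. v i = c}"

definition rep_dsum :: "nat \<Rightarrow> nat \<Rightarrow> (nat \<Rightarrow> 'a::zero) set" where
  "rep_dsum s t = {v \<in> vecs (s * t).
      \<forall>j<s. (\<lambda>k. if k < t then v (j * t + k) else 0) \<in> rep_code t}"

definition grp_alg :: "('g, 'b) monoid_scheme \<Rightarrow> ('g \<Rightarrow> 'a::zero) set" where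
  "grp_alg H = {f. \<forall>x. x \<notin> carrier H \<longrightarrow> f x = 0}"

definition conv :: "('g, 'b) monoid_scheme \<Rightarrow> ('g \<Rightarrow> 'a::comm_ring_1) \<Rightarrow> ('g \<Rightarrow> 'a) \<Rightarrow> ('g \<Rightarrow> 'a)" where
  "conv H f g = (\<lambda>h. if h \<in> carrier H
      then (\<Sum>x\<in>carrier H. f x * g (inv\<^bsub>H\<^esub> x \<otimes>\<^bsub>H\<^esub> h)) else 0)"

definition two_sided_ideal :: "('g, 'b) monoid_scheme \<Rightarrow> ('g \<Rightarrow> 'a::comm_ring_1) set \<Rightarrow> bool" where
  "two_sided_ideal H I \<longleftrightarrow> I \<subseteq> grp_alg H \<and> (\<lambda>_. 0) \<in> I
     \<and> (\<forall>a\<in>I. \<forall>b\<in>I. (\<lambda>x. a x + b x) \<in> I)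
     \<and> (\<forall>a\<in>I. (\<lambda>x. - a x) \<in> I)
     \<and> (\<forall>f\<in>grp_alg H. \<forall>a\<in>I. conv H f a \<in> I \<and> conv H a f \<in> I)"

definition lin_ext :: "nat \<Rightarrow> (nat \<Rightarrow> 'g) \<Rightarrow> (nat \<Rightarrow> 'a::comm_ring_1) \<Rightarrow> ('g \<Rightarrow> 'a)" where
  "lin_ext n \<phi> v = (\<lambda>h. \<Sum>i<n. v i * (if \<phi> i = h then 1 else 0))"

definition is_H_code :: "nat \<Rightarrow> (nat \<Rightarrow> 'a::comm_ring_1) set \<Rightarrow> ('g, 'b) monoid_scheme \<Rightarrow> bool" where
  "is_H_code n C H \<longleftrightarrow> group H \<and> finite (carrier H) \<and> card (carrier H) = n \<and>
     (\<exists>\<phi>. bij_betw \<phi> {..<n} (carrier H) \<and> two_sided_ideal H (lin_ext n \<phi> ` C))"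

text \<open>Abelian group code. Every finite group of order n is isomorphic to a group
  whose carrier is a subset of nat, so quantifying over such groups loses nothing.\<close>
definition abelian_group_code :: "nat \<Rightarrow> (nat \<Rightarrow> 'a::comm_ring_1) set \<Rightarrow> bool" where
  "abelian_group_code n C \<longleftrightarrow> (\<exists>H :: nat monoid. comm_group H \<and> is_H_code n C H)"

end

theory Submission
  imports Defs
begin

definition mulH :: "nat \<Rightarrow> nat \<Rightarrow> nat \<Rightarrow> nat \<Rightarrow> nat" where
  "mulH s t a b = ((a div t + b div t) mod s) * t + (a mod t + b mod t) mod t"

definition HH :: "nat \<Rightarrow> nat \<Rightarrow> nat monoid" where
  "HH s t = \<lparr>carrier = {..<s*t}, mult = mulH s t, one = 0\<rparr>"

lemma enc_lt: "(j::nat) < s \<Longrightarrow> k < t \<Longrightarrow> j * t + k < s * t"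
proof -
  assume a: "j < s" "k < t"
  have "j * t + k < j * t + t" using a by simp
  also have "\<dots> = Suc j * t" by simp
  also have "\<dots> \<le> s * t" using a by (intro mult_le_mono1) simp
  finally show ?thesis .
qed

lemma enc_div: "(k::nat) < t \<Longrightarrow> (j * t + k) div t = j"
  by simp

lemma enc_mod: "(k::nat) < t \<Longrightarrow> (j * t + k) mod t = k"
  by simp

lemma eq_divmod: "(x::nat) div t = y div t \<Longrightarrow> x mod t = y mod t \<Longrightarrow> x = y"
  by (metis div_mult_mod_eq)

lemma inv_mod: "(d::nat) < m \<Longrightarrow> ((m - d) mod m + d) mod m = 0"
  by (cases "d = 0") auto

lemma div_lt: "(a::nat) < s * t \<Longrightarrow> a div t < s"
  by (simp add: less_mult_imp_div_less)

definition InvS :: "nat \<Rightarrow> nat \<Rightarrow> (nat \<Rightarrow> 'a::comm_ring_1) set" where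
  "InvS s t = {f. (\<forall>h. h \<ge> s * t \<longrightarrow> f h = 0) \<and>
     (\<forall>a b. a < s * t \<longrightarrow> b < s * t \<longrightarrow> a div t = b div t \<longrightarrow> f a = f b)}"

lemma InvS_D1: "f \<in> InvS s t \<Longrightarrow> s * t \<le> h \<Longrightarrow> f h = 0"
  unfolding InvS_def by blast

lemma InvS_D2: "f \<in> InvS s t \<Longrightarrow> x < s * t \<Longrightarrow> y < s * t \<Longrightarrow> x div t = y div t \<Longrightarrow> f x = f y"
  unfolding InvS_def by blast

context
  fixes s t :: nat
  assumes s: "s \<ge> 1" and t: "t \<ge> 1"
begin

lemma mulH_lt: "mulH s t a b < s * t"
  unfolding mulH_def using s t by (intro enc_lt) auto

lemma mulH_div: "mulH s t a b div t = (a div t + b div t) mod s"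
  unfolding mulH_def using t by (subst enc_div) auto

lemma mulH_mod: "mulH s t a b mod t = (a mod t + b mod t) mod t"
  unfolding mulH_def using t by (subst enc_mod) auto

lemma HH_comm: "comm_group (HH s t)"
proof (rule comm_groupI)
  fix x y assume "x \<in> carrier (HH s t)" "y \<in> carrier (HH s t)"
  show "x \<otimes>\<^bsub>HH s t\<^esub> y \<in> carrier (HH s t)" by (simp add: HH_def mulH_lt)
  show "x \<otimes>\<^bsub>HH s t\<^esub> y = y \<otimes>\<^bsub>HH s t\<^esub> x" by (simp add: HH_def mulH_def add.commute)
next
  show "\<one>\<^bsub>HH s t\<^esub> \<in> carrier (HH s t)" using s t by (simp add: HH_def)
next
  fix x y z
  show "x \<otimes>\<^bsub>HH s t\<^esub> y \<otimes>\<^bsub>HH s t\<^esub> z = x \<otimes>\<^bsub>HH s t\<^esub> (y \<otimes>\<^bsub>HH s t\<^esub> z)"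
    unfolding HH_def apply simp
    apply (rule eq_divmod[of _ t])
     apply (simp add: mulH_div, metis mod_add_left_eq mod_add_right_eq add.assoc)
    apply (simp add: mulH_mod, metis mod_add_left_eq mod_add_right_eq add.assoc)
    done
next
  fix x assume x: "x \<in> carrier (HH s t)"
  hence xl: "x < s * t" by (simp add: HH_def)
  show "\<one>\<^bsub>HH s t\<^esub> \<otimes>\<^bsub>HH s t\<^esub> x = x"
    unfolding HH_def apply simp
    apply (rule eq_divmod[of _ t])
     apply (simp add: mulH_div div_lt xl)
    apply (simp add: mulH_mod)
    done
  define y where "y = ((s - x div t) mod s) * t + (t - x mod t) mod t"
  have yl: "y < s * t" unfolding y_def using s t by (intro enc_lt) auto
  have yd: "y div t = (s - x div t) mod s" unfolding y_def using t by (subst enc_div) auto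
  have ym: "y mod t = (t - x mod t) mod t" unfolding y_def using t by (subst enc_mod) auto
  have "y \<otimes>\<^bsub>HH s t\<^esub> x = 0"
    unfolding HH_def apply simp
    apply (rule eq_divmod[of _ t])
     apply (simp add: mulH_div yd)
     apply (rule inv_mod, simp add: div_lt xl)
    apply (simp add: mulH_mod ym)
    apply (rule inv_mod, use t in simp)
    done
  then show "\<exists>y \<in> carrier (HH s t). y \<otimes>\<^bsub>HH s t\<^esub> x = \<one>\<^bsub>HH s t\<^esub>"
    using yl by (auto simp: HH_def)
qed

lemma lin_ext_id: "lin_ext n id v = (\<lambda>h. if h < n then v h else 0)"
proof
  fix h
  have "lin_ext n id v h = (\<Sum>i<n. if i = h then v i else 0)"
    unfolding lin_ext_def by (intro sum.cong) auto
  also have "\<dots> = (if h < n then v h else 0)" by (simp add: sum.delta)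
  finally show "lin_ext n id v h = (if h < n then v h else 0)" .
qed

lemma img: "lin_ext (s * t) id ` (rep_dsum s t :: (nat \<Rightarrow> 'a::comm_ring_1) set) = InvS s t"
proof
  show "lin_ext (s * t) id ` (rep_dsum s t :: (nat \<Rightarrow> 'a::comm_ring_1) set) \<subseteq> InvS s t"
  proof
    fix f :: "nat \<Rightarrow> 'a" assume "f \<in> lin_ext (s * t) id ` rep_dsum s t"
    then obtain v where v: "v \<in> rep_dsum s t" and f: "f = lin_ext (s * t) id v" by auto
    have "f a = f b" if ab: "a < s * t" "b < s * t" "a div t = b div t" for a b
    proof -
      define j where "j = a div t"
      have j: "j < s" using ab by (simp add: j_def div_lt)
      then have "(\<lambda>k. if k < t then v (j * t + k) else 0) \<in> rep_code t" using v
        by (auto simp: rep_dsum_def)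
      then obtain c where c: "\<forall>i<t. v (j * t + i) = c" by (auto simp: rep_code_def)
      have "a = j * t + a mod t" "b = j * t + b mod t"
        using ab(3) unfolding j_def by (metis div_mult_mod_eq)+
      moreover have "a mod t < t" "b mod t < t" using t by auto
      ultimately have "v a = c" "v b = c" using c by metis+
      then show ?thesis using ab f by (simp add: lin_ext_id)
    qed
    note fab = this
    show "f \<in> InvS s t" unfolding InvS_def mem_Collect_eq
    proof (intro conjI allI impI)
      fix h :: nat assume "s * t \<le> h" then show "f h = 0" using f by (simp add: lin_ext_id)
    next
      fix x y :: nat assume "x < s * t" "y < s * t" "x div t = y div t"
      then show "f x = f y" by (rule fab)
    qed
  qed
next
  show "InvS s t \<subseteq> lin_ext (s * t) id ` (rep_dsum s t :: (nat \<Rightarrow> 'a::comm_ring_1) set)"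
  proof
    fix f :: "nat \<Rightarrow> 'a" assume f: "f \<in> InvS s t"
    have "f \<in> rep_dsum s t"
      unfolding rep_dsum_def rep_code_def vecs_def
    proof (intro CollectI conjI allI impI)
      fix i assume "i \<ge> s * t" then show "f i = 0" by (rule InvS_D1[OF f])
    next
      fix j i assume "j < s" "t \<le> i"
      then show "(if i < t then f (j * t + i) else 0) = 0" by auto
    next
      fix j assume j: "j < s"
      show "\<exists>c. \<forall>i<t. (if i < t then f (j * t + i) else 0) = c"
      proof (intro exI allI impI)
        fix i assume i: "i < t"
        have "j * t + i < s * t" "j * t + 0 < s * t" using i j t by (intro enc_lt; simp)+
        moreover have "(j * t + i) div t = (j * t + 0) div t" using i t by simp
        ultimately have "f (j * t + i) = f (j * t + 0)" by (rule InvS_D2[OF f])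
        then show "(if i < t then f (j * t + i) else 0) = f (j * t + 0)"
          using i by simp
      qed
    qed
    moreover have "f = lin_ext (s * t) id f"
      using InvS_D1[OF f] by (auto simp: lin_ext_id not_less)
    ultimately show "f \<in> lin_ext (s * t) id ` rep_dsum s t" by blast
  qed
qed

lemma conv_Inv: "a \<in> InvS s t \<Longrightarrow> conv (HH s t) f a \<in> InvS s t"
proof -
  assume a: "a \<in> InvS s t"
  interpret G: comm_group "HH s t" by (rule HH_comm)
  have "conv (HH s t) f a h = conv (HH s t) f a h'"
    if hh: "h < s * t" "h' < s * t" "h div t = h' div t" for h h'
  proof -
    have "a (inv\<^bsub>HH s t\<^esub> x \<otimes>\<^bsub>HH s t\<^esub> h) = a (inv\<^bsub>HH s t\<^esub> x \<otimes>\<^bsub>HH s t\<^esub> h')"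
      if x: "x \<in> carrier (HH s t)" for x
    proof -
      have "inv\<^bsub>HH s t\<^esub> x \<otimes>\<^bsub>HH s t\<^esub> h \<in> carrier (HH s t)"
           "inv\<^bsub>HH s t\<^esub> x \<otimes>\<^bsub>HH s t\<^esub> h' \<in> carrier (HH s t)"
        using x hh by (intro G.m_closed G.inv_closed; simp add: HH_def)+
      moreover have "(inv\<^bsub>HH s t\<^esub> x \<otimes>\<^bsub>HH s t\<^esub> h) div t = (inv\<^bsub>HH s t\<^esub> x \<otimes>\<^bsub>HH s t\<^esub> h') div t"
        using hh by (simp add: HH_def mulH_div)
      ultimately show ?thesis by (intro InvS_D2[OF a]) (simp_all add: HH_def)
    qed
    then show ?thesis using hh unfolding conv_def by (auto simp: HH_def intro!: sum.cong)
  qed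
  note cc = this
  show ?thesis unfolding InvS_def mem_Collect_eq
  proof (intro conjI allI impI)
    fix h :: nat assume "s * t \<le> h" then show "conv (HH s t) f a h = 0" by (simp add: conv_def HH_def)
  next
    fix x y :: nat assume "x < s * t" "y < s * t" "x div t = y div t"
    then show "conv (HH s t) f a x = conv (HH s t) f a y" by (rule cc)
  qed
qed

end

lemma conv_comm:
  assumes "comm_group G" "finite (carrier G)"
  shows "conv G a f = conv G f (a :: 'g \<Rightarrow> 'a::comm_ring_1)"
proof
  fix h
  interpret G: comm_group G by (rule assms(1))
  show "conv G a f h = conv G f a h"
  proof (cases "h \<in> carrier G")
    case False then show ?thesis by (simp add: conv_def)
  next
    case h: True
    have "(\<Sum>x\<in>carrier G. a x * f (inv\<^bsub>G\<^esub> x \<otimes>\<^bsub>G\<^esub> h))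
        = (\<Sum>y\<in>carrier G. f y * a (inv\<^bsub>G\<^esub> y \<otimes>\<^bsub>G\<^esub> h))"
    proof (rule sum.reindex_bij_witness[where i = "\<lambda>x. h \<otimes>\<^bsub>G\<^esub> inv\<^bsub>G\<^esub> x"
                                           and j = "\<lambda>x. h \<otimes>\<^bsub>G\<^esub> inv\<^bsub>G\<^esub> x"])
      fix x assume x: "x \<in> carrier G"
      show "h \<otimes>\<^bsub>G\<^esub> inv\<^bsub>G\<^esub> (h \<otimes>\<^bsub>G\<^esub> inv\<^bsub>G\<^esub> x) = x"
        using x h by (simp add: G.inv_mult G.m_assoc[symmetric])
      show "h \<otimes>\<^bsub>G\<^esub> inv\<^bsub>G\<^esub> x \<in> carrier G" using x h by simp
      show "f (h \<otimes>\<^bsub>G\<^esub> inv\<^bsub>G\<^esub> x) * a (inv\<^bsub>G\<^esub> (h \<otimes>\<^bsub>G\<^esub> inv\<^bsub>G\<^esub> x) \<otimes>\<^bsub>G\<^esub> h)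
          = a x * f (inv\<^bsub>G\<^esub> x \<otimes>\<^bsub>G\<^esub> h)"
        using x h by (simp add: G.inv_mult G.m_assoc G.m_comm[of h "inv\<^bsub>G\<^esub> x"] mult.commute)
    next
      fix x assume x: "x \<in> carrier G"
      show "h \<otimes>\<^bsub>G\<^esub> inv\<^bsub>G\<^esub> (h \<otimes>\<^bsub>G\<^esub> inv\<^bsub>G\<^esub> x) = x"
        using x h by (simp add: G.inv_mult G.m_assoc[symmetric])
      show "h \<otimes>\<^bsub>G\<^esub> inv\<^bsub>G\<^esub> x \<in> carrier G" using x h by simp
    qed
    then show ?thesis using h by (simp add: conv_def)
  qed
qed

theorem theorem3:
  fixes s t :: nat
  assumes "s \<ge> 1" and "t \<ge> 1"
  shows "abelian_group_code (s * t) (rep_dsum s t :: (nat \<Rightarrow> 'a::{finite, field}) set)"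
proof -
  have C: "comm_group (HH s t)" using HH_comm assms .
  then interpret G: comm_group "HH s t" .
  have fin: "finite (carrier (HH s t))" by (simp add: HH_def)
  have "two_sided_ideal (HH s t) (InvS s t :: (nat \<Rightarrow> 'a) set)"
    unfolding two_sided_ideal_def
  proof (intro conjI ballI)
    show "(InvS s t :: (nat \<Rightarrow> 'a) set) \<subseteq> grp_alg (HH s t)"
      unfolding InvS_def grp_alg_def HH_def by (auto simp: not_less)
    show "(\<lambda>_. 0) \<in> (InvS s t :: (nat \<Rightarrow> 'a) set)" by (simp add: InvS_def)
    fix a assume a: "a \<in> (InvS s t :: (nat \<Rightarrow> 'a) set)"
    have a1: "\<forall>h. s * t \<le> h \<longrightarrow> a h = 0"
      and a2: "\<forall>x y. x < s * t \<longrightarrow> y < s * t \<longrightarrow> x div t = y div t \<longrightarrow> a x = a y"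
      using a unfolding InvS_def by blast+
    show "(\<lambda>x. - a x) \<in> InvS s t" unfolding InvS_def mem_Collect_eq
    proof (intro conjI allI impI)
      fix h :: nat assume "s * t \<le> h" then show "- a h = 0" using a1 by simp
    next
      fix x y :: nat assume xy: "x < s * t" "y < s * t" "x div t = y div t"
      have "a x = a y" using a2 xy by blast
      then show "- a x = - a y" by simp
    qed
    { fix b assume b: "b \<in> (InvS s t :: (nat \<Rightarrow> 'a) set)"
      show "(\<lambda>x. a x + b x) \<in> InvS s t" 
      proof -
        have b1: "\<forall>h. s * t \<le> h \<longrightarrow> b h = 0"
          and b2: "\<forall>x y. x < s * t \<longrightarrow> y < s * t \<longrightarrow> x div t = y div t \<longrightarrow> b x = b y"
          using b unfolding InvS_def by blast+
        show ?thesis unfolding InvS_def mem_Collect_eq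
        proof (intro conjI allI impI)
          fix h :: nat assume "s * t \<le> h" then show "a h + b h = 0" using a1 b1 by simp
        next
          fix x y :: nat assume xy: "x < s * t" "y < s * t" "x div t = y div t"
          have "a x = a y" "b x = b y" using a2 b2 xy by blast+
          then show "a x + b x = a y + b y" by simp
        qed
      qed }
    fix f :: "nat \<Rightarrow> 'a" assume "f \<in> grp_alg (HH s t)"
    show "conv (HH s t) f a \<in> InvS s t" using conv_Inv[OF assms a] .
    show "conv (HH s t) a f \<in> InvS s t" 
      by (subst conv_comm[OF C fin, of a f]) (rule conv_Inv[OF assms a])
  qed
  then have "two_sided_ideal (HH s t) (lin_ext (s * t) id ` (rep_dsum s t :: (nat \<Rightarrow> 'a) set))"
    unfolding img[OF assms] .
  moreover have "bij_betw id {..<s * t} (carrier (HH s t))" by (simp add: HH_def)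
  moreover have "card (carrier (HH s t)) = s * t" by (simp add: HH_def)
  ultimately have "is_H_code (s * t) (rep_dsum s t :: (nat \<Rightarrow> 'a) set) (HH s t)"
    unfolding is_H_code_def
    apply (intro conjI G.is_group fin exI[of _ id])
    apply assumption+
    done
  then show ?thesis unfolding abelian_group_code_def
    by (intro exI[of _ "HH s t"] conjI C)
qed

end
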